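(* Let $q$ be a square prime power and let $\mathcal{B}$ be a Baer subplane of $PG(2,q)$; let $n=q+\sqrt{q}+1$. Then $\mathcal{B}$ is an optimal $(1,\mu)$-saturating $n$-set with $\mu=\frac{1}{2}(q+\sqrt{q})$. A linear code $C$ over $\mathbb{F}_q$ corresponding to $\mathcal{B}$ is an $[n,n-3,3]_q$ code with covering radius $2$, and it is a $(2,\mu)$-APMCF code.
   Context: $PG(N,q)$ is the $N$-dimensional projective space over $\mathbb{F}_q$. A Baer subplane of $PG(2,q)$, $q$ a square, is a subplane of order $\sqrt q$ (e.g. the set of points having homogeneous coordinates in $\mathbb{F}_{\sqrt q}$). For a point set $S$, a secant of $S$ is a line $\ell$ with $|\ell\cap S|\ge2$, counted with multiplicity $\binom{|\ell\cap S|}{2}$. A set $S$ of $n$ points of $PG(N,q)$ is a $(1,\mu)$-saturating $n$-set if (M1) $S$ spans $PG(N,q)$, (M2) $S\neq PG(N,q)$, and (M3) every point $Q\notin S$ lies on secants of $S$ whose multiplicities sum to at least $\mu$; it is optimal if for every $Q\notin S$ this sum is exactly $\mu$. A linear code of length $n$ over $\mathbb{F}_q$ corresponds to $S=\{P_1,\dots,P_n\}\subset PG(N,q)$ if it has a parity-check matrix whose $i$-th column is a homogeneous coordinate vector of $P_i$. An $[n,k,d]_q$ code is a linear code of length $n$, dimension $k$ and minimum distance $d$; its covering radius $R$ is $\max_{x\in\mathbb{F}_q^n} d(x,C)$ (Hamming distance). A code $C$ with covering radius $R$ is an $(R,\mu)$-APMCF code if every $x\in\mathbb{F}_q^n$ with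 $d(x,C)=R$ is at distance exactly $R$ from exactly $\mu$ codewords. *)

theory Defs
  imports "HOL-Analysis.Analysis"
begin

section \<open>The projective plane PG(2,q), q = CARD('a)\<close>

definition proj_point :: "('a::field) ^ 3 \<Rightarrow> ('a ^ 3) set" where
  "proj_point v = {c *s v | c. c \<noteq> 0}"

definition PG2 :: "(('a::{field,finite}) ^ 3) set set" where
  "PG2 = {proj_point v | v. v \<noteq> 0}"

definition line_of :: "('a::{field,finite}) ^ 3 \<Rightarrow> ('a ^ 3) set set" where
  "line_of u = {P \<in> PG2. \<exists>v\<in>P. (\<Sum>i\<in>UNIV. u $ i * v $ i) = 0}"

definition PG2_lines :: "(('a::{field,finite}) ^ 3) set set set" where
  "PG2_lines = {line_of u | u. u \<noteq> 0}"

definition collinear3 :: "(('a::{field,finite}) ^ 3) set \<Rightarrow> ('a ^ 3) set \<Rightarrow> ('a ^ 3) set \<Rightarrow> bool" where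
  "collinear3 P Q R \<longleftrightarrow> (\<exists>l\<in>PG2_lines. P \<in> l \<and> Q \<in> l \<and> R \<in> l)"

definition reps :: "(('a::{field,finite}) ^ 3) set set \<Rightarrow> ('a ^ 3) set" where
  "reps S = {v. v \<noteq> 0 \<and> proj_point v \<in> S}"

definition spans_PG2 :: "(('a::{field,finite}) ^ 3) set set \<Rightarrow> bool" where
  "spans_PG2 S \<longleftrightarrow> (\<forall>w::'a^3. \<exists>c. w = (\<Sum>v\<in>reps S. c v *s v))"

text \<open>B (with the lines of PG(2,q) meeting it in at least two points, restricted to B) is a
  projective plane of order m: every such line has m+1 points of B, any two distinct such lines meet
  in a point of B, and B contains four points no three of which are collinear.\<close>

definition subplane_of_order :: "(('a::{field,finite}) ^ 3) set set \<Rightarrow> nat \<Rightarrow> bool" where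
  "subplane_of_order B m \<longleftrightarrow>
     B \<subseteq> PG2 \<and>
     (\<forall>l\<in>PG2_lines. card (l \<inter> B) \<ge> 2 \<longrightarrow> card (l \<inter> B) = m + 1) \<and>
     (\<forall>l1\<in>PG2_lines. \<forall>l2\<in>PG2_lines.
        card (l1 \<inter> B) \<ge> 2 \<and> card (l2 \<inter> B) \<ge> 2 \<and> l1 \<inter> B \<noteq> l2 \<inter> B
        \<longrightarrow> l1 \<inter> l2 \<inter> B \<noteq> {}) \<and>
     (\<exists>P1 P2 P3 P4. {P1, P2, P3, P4} \<subseteq> B \<and> card {P1, P2, P3, P4} = 4 \<and>
        \<not> collinear3 P1 P2 P3 \<and> \<not> collinear3 P1 P2 P4 \<and>
        \<not> collinear3 P1 P3 P4 \<and> \<not> collinear3 P2 P3 P4)"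

definition baer_subplane :: "(('a::{field,finite}) ^ 3) set set \<Rightarrow> bool" where
  "baer_subplane B \<longleftrightarrow> (\<exists>r. CARD('a) = r ^ 2 \<and> subplane_of_order B r)"

definition secant_mult :: "(('a::{field,finite}) ^ 3) set set \<Rightarrow> ('a ^ 3) set \<Rightarrow> nat" where
  "secant_mult S Q = (\<Sum>l\<in>{l \<in> PG2_lines. Q \<in> l}. card (l \<inter> S) choose 2)"

definition saturating_1mu :: "(('a::{field,finite}) ^ 3) set set \<Rightarrow> nat \<Rightarrow> nat \<Rightarrow> bool" where
  "saturating_1mu S n \<mu> \<longleftrightarrow> S \<subseteq> PG2 \<and> card S = n \<and>
     spans_PG2 S \<and> S \<noteq> PG2 \<and> (\<forall>Q\<in>PG2 - S. secant_mult S Q \<ge> \<mu>)"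

definition optimal_saturating_1mu :: "(('a::{field,finite}) ^ 3) set set \<Rightarrow> nat \<Rightarrow> nat \<Rightarrow> bool" where
  "optimal_saturating_1mu S n \<mu> \<longleftrightarrow> saturating_1mu S n \<mu> \<and> (\<forall>Q\<in>PG2 - S. secant_mult S Q = \<mu>)"

definition words :: "nat \<Rightarrow> (nat \<Rightarrow> 'a::zero) set" where
  "words n = {x. \<forall>i\<ge>n. x i = 0}"

definition hamming :: "nat \<Rightarrow> (nat \<Rightarrow> 'a) \<Rightarrow> (nat \<Rightarrow> 'a) \<Rightarrow> nat" where
  "hamming n x y = card {i. i < n \<and> x i \<noteq> y i}"

definition linear_code :: "nat \<Rightarrow> (nat \<Rightarrow> 'a::field) set \<Rightarrow> bool" where
  "linear_code n C \<longleftrightarrow> C \<subseteq> words n \<and> (\<lambda>_. 0) \<in> C \<and>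
     (\<forall>x\<in>C. \<forall>y\<in>C. (\<lambda>i. x i + y i) \<in> C) \<and> (\<forall>c. \<forall>x\<in>C. (\<lambda>i. c * x i) \<in> C)"

definition code_dim :: "(nat \<Rightarrow> 'a::{field,finite}) set \<Rightarrow> nat \<Rightarrow> bool" where
  "code_dim C k \<longleftrightarrow> card C = CARD('a) ^ k"

definition min_dist :: "nat \<Rightarrow> (nat \<Rightarrow> 'a) set \<Rightarrow> nat" where
  "min_dist n C = Min {hamming n x y | x y. x \<in> C \<and> y \<in> C \<and> x \<noteq> y}"

definition nkd_code :: "nat \<Rightarrow> nat \<Rightarrow> nat \<Rightarrow> (nat \<Rightarrow> 'a::{field,finite}) set \<Rightarrow> bool" where
  "nkd_code n k d C \<longleftrightarrow> linear_code n C \<and> code_dim C k \<and> min_dist n C = d"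

definition dist_to_code :: "nat \<Rightarrow> (nat \<Rightarrow> 'a) set \<Rightarrow> (nat \<Rightarrow> 'a) \<Rightarrow> nat" where
  "dist_to_code n C x = Min {hamming n x c | c. c \<in> C}"

definition covering_radius :: "nat \<Rightarrow> (nat \<Rightarrow> 'a::zero) set \<Rightarrow> nat" where
  "covering_radius n C = Max {dist_to_code n C x | x. x \<in> words n}"

definition APMCF :: "nat \<Rightarrow> (nat \<Rightarrow> 'a::zero) set \<Rightarrow> nat \<Rightarrow> nat \<Rightarrow> bool" where
  "APMCF n C R \<mu> \<longleftrightarrow> covering_radius n C = R \<and>
     (\<forall>x\<in>words n. dist_to_code n C x = R \<longrightarrow> card {c \<in> C. hamming n x c = R} = \<mu>)"

definition parity_check_code :: "nat \<Rightarrow> (nat \<Rightarrow> ('a::field) ^ 3) \<Rightarrow> (nat \<Rightarrow> 'a) set" where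
  "parity_check_code n h = {x \<in> words n. (\<Sum>i<n. x i *s h i) = 0}"

definition columns_of :: "(('a::{field,finite}) ^ 3) set set \<Rightarrow> nat \<Rightarrow> (nat \<Rightarrow> 'a ^ 3) \<Rightarrow> bool" where
  "columns_of S n h \<longleftrightarrow> (\<forall>i<n. h i \<noteq> 0) \<and> inj_on (\<lambda>i. proj_point (h i)) {..<n} \<and>
     (\<lambda>i. proj_point (h i)) ` {..<n} = S"

end

theory Submission
  imports Defs
begin

definition dt :: "('a::field)^3 \<Rightarrow> 'a^3 \<Rightarrow> 'a" where
  "dt u v = (\<Sum>i\<in>UNIV. u $ i * v $ i)"

definition cr :: "('a::field)^3 \<Rightarrow> 'a^3 \<Rightarrow> 'a^3" where
  "cr v w = vector [v$2 * w$3 - v$3 * w$2, v$3 * w$1 - v$1 * w$3, v$1 * w$2 - v$2 * w$1]"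

lemma dt3: "dt u v = u$1 * v$1 + u$2 * v$2 + u$3 * v$3"
  unfolding dt_def sum_3 by simp

lemma cr_comp [simp]:
  "cr v w $ 1 = v$2 * w$3 - v$3 * w$2" "cr v w $ 2 = v$3 * w$1 - v$1 * w$3" "cr v w $ 3 = v$1 * w$2 - v$2 * w$1"
  unfolding cr_def by simp_all

lemma vec3_eq: "(x::'a^3) = y \<longleftrightarrow> x$1 = y$1 \<and> x$2 = y$2 \<and> x$3 = y$3"
  by (simp add: vec_eq_iff forall_3)

lemma vec3_zero: "(x::'a::zero^3) = 0 \<longleftrightarrow> x$1 = 0 \<and> x$2 = 0 \<and> x$3 = 0"
  by (simp add: vec_eq_iff forall_3)

lemma dt_comm: "dt u v = dt v u" by (simp add: dt3 mult.commute)
lemma dt_smult [simp]: "dt u (c *s v) = c * dt u v" by (simp add: dt3 algebra_simps)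
lemma dt_smult1 [simp]: "dt (c *s u) v = c * dt u v" by (simp add: dt3 algebra_simps)
lemma dt_add [simp]: "dt u (v + w) = dt u v + dt u w" by (simp add: dt3 algebra_simps)
lemma dt_diff [simp]: "dt u (v - w) = dt u v - dt u w" by (simp add: dt3 algebra_simps)
lemma dt_zero [simp]: "dt u 0 = 0" by (simp add: dt3)

lemma cr_orth1 [simp]: "dt v (cr v w) = 0" by (simp add: dt3 algebra_simps)
lemma cr_orth2 [simp]: "dt w (cr v w) = 0" by (simp add: dt3 algebra_simps)

lemma cr_zero_par:
  fixes a b :: "('a::field)^3"
  assumes "cr a b = 0" "b \<noteq> 0"
  shows "\<exists>c. a = c *s b"
proof -
  have e: "a$2 * b$3 = a$3 * b$2" "a$3 * b$1 = a$1 * b$3" "a$1 * b$2 = a$2 * b$1"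
    using assms(1) by (simp_all add: vec3_zero)
  from assms(2) have "b$1 \<noteq> 0 \<or> b$2 \<noteq> 0 \<or> b$3 \<noteq> 0" by (simp add: vec3_zero)
  then show ?thesis
  proof (elim disjE)
    assume h: "b$1 \<noteq> 0"
    show ?thesis
      apply (rule exI[of _ "a$1 / b$1"])
      using h e by (simp add: vec3_eq field_simps)
  next
    assume h: "b$2 \<noteq> 0"
    show ?thesis
      apply (rule exI[of _ "a$2 / b$2"])
      using h e by (simp add: vec3_eq field_simps)
  next
    assume h: "b$3 \<noteq> 0"
    show ?thesis
      apply (rule exI[of _ "a$3 / b$3"])
      using h e by (simp add: vec3_eq field_simps)
  qed
qed

lemma cr_cr_orth:
  assumes "dt u v = 0" "dt u w = 0"
  shows "cr u (cr v w) = 0"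
proof -
  have "cr u (cr v w) = dt u w *s v - dt u v *s w"
    by (simp add: vec3_eq dt3 algebra_simps)
  with assms show ?thesis by simp
qed

lemma cramer:
  "dt v3 (cr v1 v2) *s w = dt w (cr v2 v3) *s v1 + dt w (cr v3 v1) *s v2 + dt w (cr v1 v2) *s v3"
  by (simp add: vec3_eq dt3 algebra_simps)


lemma line_of_dt: "line_of u = {P \<in> PG2. \<exists>v\<in>P. dt u v = 0}"
  unfolding line_of_def dt_def by simp

lemma pp_self: "v \<in> proj_point v"
  unfolding proj_point_def by (rule CollectI, rule exI[of _ 1]) simp

lemma pp_mem: "w \<in> proj_point v \<longleftrightarrow> (\<exists>c. c \<noteq> 0 \<and> w = c *s v)"
  unfolding proj_point_def by auto

lemma pp_eq:
  fixes v :: "('a::field)^3"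
  assumes "w \<in> proj_point v"
  shows "proj_point w = proj_point v"
proof -
  obtain c where c: "c \<noteq> 0" "w = c *s v" using assms pp_mem by blast
  show ?thesis
  proof (rule set_eqI)
    fix x
    show "x \<in> proj_point w \<longleftrightarrow> x \<in> proj_point v"
      unfolding pp_mem c(2)
    proof
      assume "\<exists>d. d \<noteq> 0 \<and> x = d *s (c *s v)"
      then obtain d where "d \<noteq> 0" "x = d *s (c *s v)" by blast
      then show "\<exists>d. d \<noteq> 0 \<and> x = d *s v" using c(1)
        by (intro exI[of _ "d*c"]) (simp add: vector_smult_assoc)
    next
      assume "\<exists>d. d \<noteq> 0 \<and> x = d *s v"
      then obtain d where "d \<noteq> 0" "x = d *s v" by blast
      then show "\<exists>d. d \<noteq> 0 \<and> x = d *s (c *s v)" using c(1)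
        by (intro exI[of _ "d/c"]) (simp add: vector_smult_assoc)
    qed
  qed
qed

lemma pp_eq_iff:
  fixes v :: "('a::field)^3"
  shows "proj_point w = proj_point v \<longleftrightarrow> w \<in> proj_point v"
  using pp_eq pp_self by metis

lemma pp_nonzero: "v \<noteq> 0 \<Longrightarrow> x \<in> proj_point v \<Longrightarrow> (x::('a::field)^3) \<noteq> 0"
  unfolding pp_mem by auto

lemma PG2_rep:
  assumes "P \<in> (PG2 :: ('a::{field,finite}^3) set set)" "x \<in> P"
  shows "x \<noteq> 0 \<and> P = proj_point x"
proof -
  obtain v where v: "v \<noteq> 0" "P = proj_point v" using assms(1) unfolding PG2_def by blast
  then show ?thesis using assms(2) pp_nonzero pp_eq by metis
qed

lemma PG2_ex: "P \<in> (PG2 :: ('a::{field,finite}^3) set set) \<Longrightarrow> \<exists>v. v \<noteq> 0 \<and> P = proj_point v"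
  unfolding PG2_def by blast

lemma PG2_I: "v \<noteq> 0 \<Longrightarrow> proj_point v \<in> (PG2 :: ('a::{field,finite}^3) set set)"
  unfolding PG2_def by blast

lemma on_line:
  fixes v :: "'a::{field,finite}^3"
  assumes "v \<noteq> 0"
  shows "proj_point v \<in> line_of u \<longleftrightarrow> dt u v = 0"
proof
  assume "proj_point v \<in> line_of u"
  then obtain x where "x \<in> proj_point v" "dt u x = 0" unfolding line_of_dt by blast
  then show "dt u v = 0" unfolding pp_mem by auto
next
  assume "dt u v = 0" then show "proj_point v \<in> line_of u"
    unfolding line_of_dt using PG2_I[OF assms] pp_self by blast
qed

lemma line_of_smult: "c \<noteq> 0 \<Longrightarrow> line_of (c *s u) = line_of (u::'a::{field,finite}^3)"
  unfolding line_of_dt by auto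

lemma PG2_finite: "finite (S :: ('a::{field,finite}^3) set set)"
  by simp

lemma card_pp:
  fixes v :: "'a::{field,finite}^3"
  assumes "v \<noteq> 0"
  shows "card (proj_point v) = CARD('a) - 1"
proof -
  have "proj_point v = (\<lambda>c. c *s v) ` {c. c \<noteq> 0}" unfolding proj_point_def by auto
  moreover have "inj_on (\<lambda>c. c *s v) {c. c \<noteq> 0}"
  proof (rule inj_onI)
    fix a b assume "a *s v = b *s v"
    obtain i where i: "v $ i \<noteq> 0" using assms by (metis vec_eq_iff zero_index)
    have "a * v $ i = b * v $ i" using \<open>a *s v = b *s v\<close> by (metis vector_smult_component)
    with i show "a = b" by simp
  qed
  moreover have "card {c::'a. c \<noteq> 0} = CARD('a) - 1"
  proof -
    have "{c::'a. c \<noteq> 0} = UNIV - {0}" by auto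
    then show ?thesis by (simp add: card_Diff_singleton)
  qed
  ultimately show ?thesis by (simp add: card_image)
qed

lemma fiber_card:
  assumes "finite A" "finite Y" "f ` A \<subseteq> Y" "\<And>y. y \<in> Y \<Longrightarrow> card {x\<in>A. f x = y} = k"
  shows "card A = card Y * k"
proof -
  have "A = (\<Union>y\<in>Y. {x\<in>A. f x = y})" using assms(3) by auto
  then have "card A = card (\<Union>y\<in>Y. {x\<in>A. f x = y})" by simp
  also have "\<dots> = (\<Sum>y\<in>Y. card {x\<in>A. f x = y})"
    by (rule card_UN_disjoint) (use assms(1,2) in auto)
  also have "\<dots> = card Y * k" using assms(4) by simp
  finally show ?thesis .
qed

lemma card_ker:
  fixes u :: "'a::{field,finite}^3"
  assumes "u \<noteq> 0"
  shows "card {x. dt u x = 0} = CARD('a) ^ 2"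
proof -
  obtain k where k: "u $ k \<noteq> 0" using assms by (metis vec_eq_iff zero_index)
  define t where "t c = (\<chi> i. if i = k then c / u $ k else 0)" for c :: 'a
  have dtt: "dt u (t c) = c" for c
  proof -
    have "dt u (t c) = (\<Sum>i\<in>UNIV. if i = k then u $ i * (c / u $ k) else 0)"
      unfolding dt_def t_def by (intro sum.cong) auto
    also have "\<dots> = c" using k by simp
    finally show ?thesis .
  qed
  have "card (UNIV :: ('a^3) set) = card (UNIV :: 'a set) * card {x. dt u x = 0}"
  proof (rule fiber_card[where f = "dt u"])
    fix y :: 'a
    have "bij_betw (\<lambda>x. x + t y) {x. dt u x = 0} {x \<in> UNIV. dt u x = y}"
    proof (rule bij_betwI[where g = "\<lambda>x. x - t y"])
    qed (auto simp: dtt)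
    then show "card {x \<in> UNIV. dt u x = y} = card {x. dt u x = 0}"
      by (simp add: bij_betw_same_card)
  qed auto
  then have "CARD('a) ^ 3 = CARD('a) * card {x. dt u x = 0}" by simp
  then show ?thesis by (simp add: power3_eq_cube power2_eq_square)
qed

lemma card_ge2: "CARD('a::{field,finite}) \<ge> 2"
proof -
  have "{0::'a, 1} \<subseteq> UNIV" by simp
  then have "card {0::'a, 1} \<le> CARD('a)" by (rule card_mono[rotated]) simp
  then show ?thesis by simp
qed

lemma line_union:
  fixes u :: "'a::{field,finite}^3"
  shows "\<Union>(line_of u) = {x. x \<noteq> 0 \<and> dt u x = 0}"
proof (rule set_eqI)
  fix x
  show "x \<in> \<Union>(line_of u) \<longleftrightarrow> x \<in> {x. x \<noteq> 0 \<and> dt u x = 0}"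
  proof
    assume "x \<in> \<Union>(line_of u)"
    then obtain P where P: "P \<in> line_of u" "x \<in> P" by blast
    then have "P \<in> PG2" unfolding line_of_dt by blast
    then have "x \<noteq> 0" "P = proj_point x" using PG2_rep P(2) by blast+
    then show "x \<in> {x. x \<noteq> 0 \<and> dt u x = 0}" using P(1) on_line by auto
  next
    assume "x \<in> {x. x \<noteq> 0 \<and> dt u x = 0}"
    then show "x \<in> \<Union>(line_of u)" using on_line[of x u] pp_self by blast
  qed
qed

lemma card_line:
  fixes u :: "'a::{field,finite}^3"
  assumes "u \<noteq> 0"
  shows "card (line_of u) = CARD('a) + 1"
proof -
  let ?q = "CARD('a)"
  have h1: "\<And>c. c \<in> line_of u \<Longrightarrow> card c = ?q - 1"
      using PG2_ex card_pp unfolding line_of_dt by blast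
  have h2: "\<And>c1 c2. c1 \<in> line_of u \<Longrightarrow> c2 \<in> line_of u \<Longrightarrow> c1 \<noteq> c2 \<Longrightarrow> c1 \<inter> c2 = {}"
      unfolding line_of_dt using PG2_rep by blast
  have "(?q - 1) * card (line_of u) = card (\<Union>(line_of u))"
    by (rule card_partition[OF finite finite h1 h2])
  also have "\<dots> = card ({x. dt u x = 0} - {0})" unfolding line_union by (intro arg_cong[where f=card]) auto
  also have "\<dots> = ?q ^ 2 - 1" using card_ker[OF assms] by (simp add: card_Diff_singleton)
  also have "\<dots> = (?q - 1) * (?q + 1)" by (simp add: power2_eq_square algebra_simps)
  finally have "(?q - 1) * card (line_of u) = (?q - 1) * (?q + 1)" .
  then show ?thesis using card_ge2[where 'a='a] by (subst (asm) mult_left_cancel) auto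
qed


lemma line_sub: "l \<in> PG2_lines \<Longrightarrow> l \<subseteq> PG2"
  unfolding PG2_lines_def line_of_dt by auto

lemma cr_nonzero:
  fixes v w :: "'a::field^3"
  assumes "v \<noteq> 0" "w \<noteq> 0" "proj_point v \<noteq> proj_point w"
  shows "cr v w \<noteq> 0"
proof
  assume "cr v w = 0"
  then obtain c where c: "v = c *s w" using cr_zero_par assms(2) by blast
  with assms(1) have "c \<noteq> 0" by auto
  with c have "v \<in> proj_point w" unfolding pp_mem by blast
  then show False using assms(3) pp_eq by blast
qed

lemma line_cr_in: "cr v w \<noteq> 0 \<Longrightarrow> line_of (cr v w) \<in> (PG2_lines :: ('a::{field,finite}^3) set set set)"
  unfolding PG2_lines_def by blast

lemma line_cr_mem:
  fixes v w :: "'a::{field,finite}^3"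
  assumes "v \<noteq> 0" "w \<noteq> 0"
  shows "proj_point v \<in> line_of (cr v w)" "proj_point w \<in> line_of (cr v w)"
  using assms by (simp_all add: on_line dt_comm)

lemma line_unique_cr:
  fixes v w :: "'a::{field,finite}^3"
  assumes "l \<in> PG2_lines" "v \<noteq> 0" "w \<noteq> 0" "proj_point v \<noteq> proj_point w"
    "proj_point v \<in> l" "proj_point w \<in> l"
  shows "l = line_of (cr v w)"
proof -
  obtain u where u: "u \<noteq> 0" "l = line_of u" using assms(1) unfolding PG2_lines_def by blast
  have "dt u v = 0" "dt u w = 0" using assms u on_line by blast+
  then have "cr u (cr v w) = 0" by (rule cr_cr_orth)
  then obtain c where c: "u = c *s cr v w" using cr_zero_par cr_nonzero assms(2-4) by blast
  with u(1) have "c \<noteq> 0" by auto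
  then show ?thesis using u(2) c line_of_smult by simp
qed

lemma line_unique:
  assumes "l1 \<in> PG2_lines" "l2 \<in> PG2_lines" "P \<in> l1" "Q \<in> l1" "P \<in> l2" "Q \<in> l2" "P \<noteq> Q"
  shows "l1 = (l2 :: ('a::{field,finite}^3) set set)"
proof -
  have "P \<in> PG2" "Q \<in> PG2" using assms line_sub by blast+
  then obtain v w where "v \<noteq> 0" "P = proj_point v" "w \<noteq> 0" "Q = proj_point w" using PG2_ex by metis
  then show ?thesis using line_unique_cr assms by metis
qed

definition jn :: "('a::{field,finite}^3) set \<Rightarrow> ('a^3) set \<Rightarrow> ('a^3) set set" where
  "jn P Q = (SOME l. l \<in> PG2_lines \<and> P \<in> l \<and> Q \<in> l)"

lemma line_exists:
  assumes "P \<in> PG2" "Q \<in> PG2" "P \<noteq> Q"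
  shows "\<exists>l \<in> (PG2_lines :: ('a::{field,finite}^3) set set set). P \<in> l \<and> Q \<in> l"
proof -
  obtain v w :: "'a^3" where "v \<noteq> 0" "P = proj_point v" "w \<noteq> 0" "Q = proj_point w" using assms PG2_ex by metis
  then show ?thesis using line_cr_in line_cr_mem cr_nonzero assms(3) by metis
qed

lemma jn:
  assumes "P \<in> PG2" "Q \<in> PG2" "P \<noteq> Q"
  shows "jn P Q \<in> PG2_lines" "P \<in> jn P Q" "Q \<in> jn P Q"
  using someI_ex[OF line_exists[OF assms, unfolded Bex_def]] unfolding jn_def by blast+

lemma jn_unique:
  assumes "l \<in> PG2_lines" "P \<in> l" "Q \<in> l" "P \<noteq> Q"
  shows "l = jn P Q"
proof -
  have "P \<in> PG2" "Q \<in> PG2" using assms line_sub by blast+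
  then show ?thesis using line_unique[OF assms(1) jn(1) assms(2,3) jn(2,3)] assms(4) by blast
qed

lemma lines_meet:
  assumes "l1 \<in> PG2_lines" "l2 \<in> PG2_lines"
  shows "\<exists>P. P \<in> l1 \<and> P \<in> (l2 :: ('a::{field,finite}^3) set set)"
proof -
  obtain u1 where u1: "u1 \<noteq> 0" "l1 = line_of u1" using assms(1) unfolding PG2_lines_def by blast
  obtain u2 where u2: "u2 \<noteq> 0" "l2 = line_of u2" using assms(2) unfolding PG2_lines_def by blast
  show ?thesis
  proof (cases "cr u1 u2 = 0")
    case False
    then have "proj_point (cr u1 u2) \<in> l1" "proj_point (cr u1 u2) \<in> l2"
      using u1 u2 False by (simp_all add: on_line)
    then show ?thesis by blast
  next
    case True
    then obtain c where c: "u1 = c *s u2" using cr_zero_par u2(1) by blast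
    with u1(1) have "c \<noteq> 0" by auto
    then have "l1 = l2" using c u1 u2 line_of_smult by simp
    moreover have "card l2 = CARD('a) + 1" using card_line u2 by simp
    then have "l2 \<noteq> {}" by auto
    ultimately show ?thesis by blast
  qed
qed

lemma span2_cr:
  fixes v w x :: "'a::field^3"
  assumes "cr v w \<noteq> 0" "dt x (cr v w) = 0"
  shows "\<exists>a b. x = a *s v + b *s w"
proof -
  obtain k where k: "cr v w $ k \<noteq> 0" using assms(1) by (metis vec_eq_iff zero_index)
  define z :: "'a^3" where "z = (\<chi> i. if i = k then 1 else 0)"
  have dz: "dt z y = y $ k" for y
  proof -
    have "dt z y = (\<Sum>i\<in>UNIV. if i = k then y $ i else 0)"
      unfolding dt_def z_def by (intro sum.cong) auto
    then show ?thesis by simp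
  qed
  have D: "dt z (cr v w) \<noteq> 0" using k dz by simp
  have "dt z (cr v w) *s x = dt x (cr w z) *s v + dt x (cr z v) *s w + dt x (cr v w) *s z"
    by (rule cramer)
  then have "dt z (cr v w) *s x = dt x (cr w z) *s v + dt x (cr z v) *s w" using assms(2) by simp
  then have "x = (dt x (cr w z) / dt z (cr v w)) *s v + (dt x (cr z v) / dt z (cr v w)) *s w"
    using D by (simp add: vec3_eq field_simps)
  then show ?thesis by blast
qed

lemma span2:
  fixes v w x :: "'a::{field,finite}^3"
  assumes "l \<in> PG2_lines" "v \<noteq> 0" "w \<noteq> 0" "proj_point v \<noteq> proj_point w"
    "proj_point v \<in> l" "proj_point w \<in> l" "x \<noteq> 0" "proj_point x \<in> l"
  shows "\<exists>a b. x = a *s v + b *s w"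
proof -
  have "l = line_of (cr v w)" using line_unique_cr assms(1-6) by blast
  then have "dt x (cr v w) = 0" using assms(7,8) on_line dt_comm by metis
  then show ?thesis using span2_cr cr_nonzero assms(2-4) by blast
qed


lemma card_line': "(l :: ('a::{field,finite}^3) set set) \<in> PG2_lines \<Longrightarrow> card l = CARD('a) + 1"
proof -
  assume "l \<in> PG2_lines"
  then obtain u :: "'a^3" where "u \<noteq> 0" "l = line_of u" unfolding PG2_lines_def by blast
  then show ?thesis using card_line by simp
qed

locale baer =
  fixes B :: "('a::{field,finite}^3) set set" and r :: nat
  assumes cardq: "CARD('a) = r^2" and sub: "subplane_of_order B r"
begin

definition Bline :: "('a^3) set set \<Rightarrow> bool" where
  "Bline l \<longleftrightarrow> l \<in> PG2_lines \<and> card (l \<inter> B) \<ge> 2"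

lemma sub1: "B \<subseteq> PG2"
  using sub[unfolded subplane_of_order_def] by (rule conjunct1)
lemma sub2: "\<forall>l\<in>PG2_lines. card (l \<inter> B) \<ge> 2 \<longrightarrow> card (l \<inter> B) = r + 1"
  using conjunct2[OF sub[unfolded subplane_of_order_def]] by (rule conjunct1)
lemma sub3: "\<forall>l1\<in>PG2_lines. \<forall>l2\<in>PG2_lines.
        card (l1 \<inter> B) \<ge> 2 \<and> card (l2 \<inter> B) \<ge> 2 \<and> l1 \<inter> B \<noteq> l2 \<inter> B
        \<longrightarrow> l1 \<inter> l2 \<inter> B \<noteq> {}"
  using conjunct2[OF conjunct2[OF sub[unfolded subplane_of_order_def]]] by (rule conjunct1)
lemma sub4: "\<exists>P1 P2 P3 P4. {P1, P2, P3, P4} \<subseteq> B \<and> card {P1, P2, P3, P4} = 4 \<and>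
        \<not> collinear3 P1 P2 P3 \<and> \<not> collinear3 P1 P2 P4 \<and>
        \<not> collinear3 P1 P3 P4 \<and> \<not> collinear3 P2 P3 P4"
  using conjunct2[OF conjunct2[OF sub[unfolded subplane_of_order_def]]] by (rule conjunct2)

lemma B_sub: "B \<subseteq> PG2" by (rule sub1)

lemma r_ge2: "r \<ge> 2"
proof -
  have "r^2 \<ge> 2" using card_ge2[where 'a='a] cardq by simp
  show ?thesis
  proof (rule ccontr)
    assume "\<not> r \<ge> 2"
    then have "r \<le> 1" by simp
    then have "r^2 \<le> 1^2" by (rule power_mono) simp
    with \<open>r^2 \<ge> 2\<close> show False by simp
  qed
qed

lemma two_pts: "card (A :: 'b set) \<ge> 2 \<Longrightarrow> \<exists>P Q. P \<in> A \<and> Q \<in> A \<and> P \<noteq> Q"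
proof -
  assume h: "card A \<ge> 2"
  then have "A \<noteq> {}" by auto
  then obtain P where P: "P \<in> A" by blast
  have "finite A" using h card.infinite by fastforce
  then have "card (A - {P}) \<ge> 1" using h P by (simp add: card_Diff_singleton)
  then have "A - {P} \<noteq> {}" by (metis card.empty not_one_le_zero)
  then obtain Q where "Q \<in> A - {P}" by blast
  then show ?thesis using P by blast
qed

lemma Bline_card: "Bline l \<Longrightarrow> card (l \<inter> B) = r + 1"
  using sub2 unfolding Bline_def by blast

lemma Bline_meet:
  assumes "Bline l1" "Bline l2" "l1 \<noteq> l2"
  shows "\<exists>P\<in>B. P \<in> l1 \<and> P \<in> l2"
proof -
  have "l1 \<inter> B \<noteq> l2 \<inter> B"
  proof
    assume eq: "l1 \<inter> B = l2 \<inter> B"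
    have "card (l1 \<inter> B) \<ge> 2" using assms(1) Bline_def by blast
    then obtain P Q where "P \<in> l1 \<inter> B" "Q \<in> l1 \<inter> B" "P \<noteq> Q"
      using two_pts by blast
    moreover have "l1 \<in> PG2_lines" "l2 \<in> PG2_lines" using assms unfolding Bline_def by auto
    ultimately have "l1 = l2" using line_unique[of l1 l2 P Q] eq by blast
    then show False using assms(3) by blast
  qed
  have a: "l1 \<in> PG2_lines" "2 \<le> card (l1 \<inter> B)" "l2 \<in> PG2_lines" "2 \<le> card (l2 \<inter> B)"
    using assms unfolding Bline_def by auto
  have "l1 \<inter> l2 \<inter> B \<noteq> {}"
    using sub3[rule_format, OF a(1) a(3)] a(2,4) \<open>l1 \<inter> B \<noteq> l2 \<inter> B\<close> by blast
  then show ?thesis by blast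
qed


lemma pts_two: "P \<in> A \<Longrightarrow> Q \<in> A \<Longrightarrow> P \<noteq> Q \<Longrightarrow> finite A \<Longrightarrow> card A \<ge> 2"
proof -
  assume "P \<in> A" "Q \<in> A" "P \<noteq> Q" "finite A"
  then have "{P, Q} \<subseteq> A" by auto
  then have "card {P, Q} \<le> card A" using \<open>finite A\<close> by (rule card_mono[rotated])
  then show ?thesis using \<open>P \<noteq> Q\<close> by simp
qed

lemma jn_Bline:
  assumes "P \<in> B" "R \<in> B" "P \<noteq> R"
  shows "Bline (jn P R)"
proof -
  have "P \<in> PG2" "R \<in> PG2" using assms B_sub by auto
  then have "jn P R \<in> PG2_lines" "P \<in> jn P R" "R \<in> jn P R" using jn assms(3) by blast+
  moreover have "2 \<le> card (jn P R \<inter> B)" by (rule pts_two[of P _ R]) (use assms \<open>P \<in> jn P R\<close> \<open>R \<in> jn P R\<close> in auto)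
  ultimately show ?thesis unfolding Bline_def by blast
qed

lemma jnB:
  assumes "P \<in> B" "R \<in> B" "P \<noteq> R"
  shows "jn P R \<in> PG2_lines" "P \<in> jn P R" "R \<in> jn P R" "Bline (jn P R)"
proof -
  have "P \<in> PG2" "R \<in> PG2" using assms B_sub by auto
  then show "jn P R \<in> PG2_lines" "P \<in> jn P R" "R \<in> jn P R" using jn assms(3) by blast+
  show "Bline (jn P R)" using jn_Bline assms by blast
qed

lemma c3: "card {a, b, c} \<le> 3"
  by (simp add: card_insert_if)

lemma quad: "\<exists>P1 P2 P3. P1 \<in> B \<and> P2 \<in> B \<and> P3 \<in> B \<and> P1 \<noteq> P2 \<and> P2 \<noteq> P3 \<and> P1 \<noteq> P3 \<and> \<not> collinear3 P1 P2 P3"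
proof -
  obtain P1 P2 P3 P4 where h: "{P1, P2, P3, P4} \<subseteq> B" "card {P1, P2, P3, P4} = 4" "\<not> collinear3 P1 P2 P3"
    using sub4 by (elim exE conjE) (rule that; assumption)
  have "P1 \<noteq> P2 \<and> P2 \<noteq> P3 \<and> P1 \<noteq> P3"
  proof (rule ccontr)
    assume "\<not> ?thesis"
    then have "P1 = P2 \<or> P2 = P3 \<or> P1 = P3" by blast
    then have "card {P1, P2, P3, P4} \<le> 3"
    proof (elim disjE)
      assume "P1 = P2" then have "{P1, P2, P3, P4} = {P2, P3, P4}" by auto
      then show ?thesis using c3[of P2 P3 P4] by simp
    next
      assume "P2 = P3" then have "{P1, P2, P3, P4} = {P1, P3, P4}" by auto
      then show ?thesis using c3[of P1 P3 P4] by simp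
    next
      assume "P1 = P3" then have "{P1, P2, P3, P4} = {P2, P3, P4}" by auto
      then show ?thesis using c3[of P2 P3 P4] by simp
    qed
    with h(2) show False by simp
  qed
  then show ?thesis using h by blast
qed

lemma card_B: "card B = r^2 + r + 1"
proof -
  obtain P P2 P3 where q: "P \<in> B" "P2 \<in> B" "P3 \<in> B" "P \<noteq> P2" "P2 \<noteq> P3" "P \<noteq> P3" "\<not> collinear3 P P2 P3"
    using quad by blast
  define m where "m = jn P2 P3"
  have mB: "Bline m" using jn_Bline q unfolding m_def by blast
  have PG: "P2 \<in> PG2" "P3 \<in> PG2" "P \<in> PG2" using q B_sub by auto
  have Pm: "P \<notin> m"
  proof
    assume "P \<in> m"
    then have "collinear3 P P2 P3" unfolding collinear3_def m_def using jn[OF PG(1,2) q(5)] by blast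
    then show False using q(7) by blast
  qed
  define L where "L = {l. Bline l \<and> P \<in> l}"
  have bij: "bij_betw (jn P) (m \<inter> B) L"
  proof (rule bij_betw_imageI)
    show "inj_on (jn P) (m \<inter> B)"
    proof (rule inj_onI)
      fix R R' assume R: "R \<in> m \<inter> B" "R' \<in> m \<inter> B" "jn P R = jn P R'"
      show "R = R'"
      proof (rule ccontr)
        assume ne: "R \<noteq> R'"
        have "R \<noteq> P" "R' \<noteq> P" using R Pm by auto
        then have l: "jn P R \<in> PG2_lines" "P \<in> jn P R" "R \<in> jn P R" "R' \<in> jn P R"
          using jnB[of P R] jnB[of P R'] q(1) R by (simp_all add: R(3))
        have "m \<in> PG2_lines" using mB Bline_def by blast
        then have "m = jn P R" using line_unique[of m "jn P R" R R'] l R ne by blast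
        then show False using Pm l by blast
      qed
    qed
    show "jn P ` (m \<inter> B) = L"
    proof
      show "jn P ` (m \<inter> B) \<subseteq> L"
      proof
        fix l assume "l \<in> jn P ` (m \<inter> B)"
        then obtain R where R: "R \<in> m \<inter> B" "l = jn P R" by blast
        then have "R \<noteq> P" using Pm by blast
        then show "l \<in> L" unfolding L_def using jnB[of P R] R q(1) by simp
      qed
      show "L \<subseteq> jn P ` (m \<inter> B)"
      proof
        fix l assume "l \<in> L"
        then have l: "Bline l" "P \<in> l" unfolding L_def by auto
        then have "l \<noteq> m" using Pm by blast
        then obtain R where R: "R \<in> B" "R \<in> l" "R \<in> m" using Bline_meet l(1) mB by blast
        then have "R \<noteq> P" using Pm by blast
        then have "l = jn P R" using jn_unique l R Bline_def by blast
        then show "l \<in> jn P ` (m \<inter> B)" using R by blast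
      qed
    qed
  qed
  then have cL: "card L = r + 1" using Bline_card[OF mB] bij_betw_same_card by metis
  have U: "B - {P} = (\<Union>l\<in>L. l \<inter> B - {P})"
  proof
    show "B - {P} \<subseteq> (\<Union>l\<in>L. l \<inter> B - {P})"
    proof
      fix R assume R: "R \<in> B - {P}"
      then have "jn P R \<in> L" "R \<in> jn P R" unfolding L_def using jnB[of P R] q(1) by auto
      then show "R \<in> (\<Union>l\<in>L. l \<inter> B - {P})" using R by blast
    qed
  qed auto
  have "card (B - {P}) = (\<Sum>l\<in>L. card (l \<inter> B - {P}))"
    unfolding U
  proof (rule card_UN_disjoint)
    show "\<forall>i\<in>L. \<forall>j\<in>L. i \<noteq> j \<longrightarrow> (i \<inter> B - {P}) \<inter> (j \<inter> B - {P}) = {}"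
    proof (intro ballI impI)
      fix i j assume ij: "i \<in> L" "j \<in> L" "i \<noteq> j"
      show "(i \<inter> B - {P}) \<inter> (j \<inter> B - {P}) = {}"
      proof (rule ccontr)
        assume "\<not> ?thesis"
        then obtain R where R: "R \<in> i" "R \<in> j" "R \<noteq> P" by blast
        have "i \<in> PG2_lines" "j \<in> PG2_lines" "P \<in> i" "P \<in> j" using ij unfolding L_def Bline_def by auto
        then have "i = j" using line_unique[of i j P R] R by blast
        then show False using ij(3) by blast
      qed
    qed
  qed simp_all
  also have "\<dots> = (\<Sum>l\<in>L. r)"
  proof (rule sum.cong)
    fix l assume "l \<in> L"
    then have "card (l \<inter> B) = r + 1" "P \<in> l \<inter> B" unfolding L_def using Bline_card q(1) by auto
    then show "card (l \<inter> B - {P}) = r" by (simp add: card_Diff_singleton)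
  qed simp
  also have "\<dots> = (r + 1) * r" using cL by simp
  finally have "card (B - {P}) = (r + 1) * r" .
  moreover have "card B = Suc (card (B - {P}))" using card.remove[OF _ q(1)] by simp
  ultimately have "card B = (r + 1) * r + 1" by simp
  then show ?thesis by (simp add: power2_eq_square algebra_simps)
qed

end

context baer
begin

lemma not_Bline_le1: "l \<in> PG2_lines \<Longrightarrow> \<not> Bline l \<Longrightarrow> card (l \<inter> B) \<le> 1"
  unfolding Bline_def by simp

lemma two_B: "\<exists>P1 P2. P1 \<in> B \<and> P2 \<in> B \<and> P1 \<noteq> P2"
  using quad by blast

lemma Bline_through:
  assumes Q: "Q \<in> PG2" "Q \<notin> B"
  shows "\<exists>l. Bline l \<and> Q \<in> l"
proof (rule ccontr)
  assume no: "\<not> (\<exists>l. Bline l \<and> Q \<in> l)"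
  obtain P1 P2 where P: "P1 \<in> B" "P2 \<in> B" "P1 \<noteq> P2" using two_B by blast
  define m where "m = jn P1 P2"
  have mB: "Bline m" "m \<in> PG2_lines" using jnB[OF P] unfolding m_def by auto
  have Qm: "Q \<notin> m" using no mB by blast
  have RQ: "R \<noteq> Q" if "R \<in> B" for R using that Q by blast
  have RPG: "R \<in> PG2" if "R \<in> B" for R using that B_sub by blast
  define g where "g R = (SOME S. S \<in> jn Q R \<and> S \<in> m)" for R
  have gR: "g R \<in> jn Q R \<and> g R \<in> m" if "R \<in> B" for R
  proof -
    have "jn Q R \<in> PG2_lines" using jn(1)[OF Q(1) RPG[OF that]] RQ[OF that] by metis
    then have "\<exists>S. S \<in> jn Q R \<and> S \<in> m" using lines_meet mB(2) by blast
    then show ?thesis unfolding g_def by (rule someI_ex)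
  qed
  have inj: "inj_on g B"
  proof (rule inj_onI)
    fix R R' assume R: "R \<in> B" "R' \<in> B" "g R = g R'"
    have l1: "jn Q R \<in> PG2_lines" "Q \<in> jn Q R" "R \<in> jn Q R"
      using jn[OF Q(1) RPG[OF R(1)]] RQ[OF R(1)] by metis+
    have l2: "jn Q R' \<in> PG2_lines" "Q \<in> jn Q R'" "R' \<in> jn Q R'"
      using jn[OF Q(1) RPG[OF R(2)]] RQ[OF R(2)] by metis+
    have S: "g R \<in> jn Q R" "g R \<in> jn Q R'" "g R \<in> m" using gR R by metis+
    have "g R \<noteq> Q" using S(3) Qm by blast
    then have eq: "jn Q R = jn Q R'" using line_unique[OF l1(1) l2(1) l1(2) S(1) l2(2) S(2)] by blast
    show "R = R'"
    proof (rule ccontr)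
      assume "R \<noteq> R'"
      then have "2 \<le> card (jn Q R \<inter> B)" using pts_two[of R "jn Q R \<inter> B" R'] l1 l2 eq R by simp
      then have "Bline (jn Q R)" using l1(1) unfolding Bline_def by blast
      then show False using no l1(2) by blast
    qed
  qed
  have "g ` B \<subseteq> m" using gR by blast
  then have "card B \<le> card m" using card_inj_on_le[OF inj] by simp
  also have "card m = r^2 + 1" using card_line'[OF mB(2)] cardq by simp
  finally have "r^2 + r + 1 \<le> r^2 + 1" using card_B by simp
  then show False using r_ge2 by simp
qed

lemma Bline_uniq:
  assumes "Q \<notin> B" "Bline l1" "Bline l2" "Q \<in> l1" "Q \<in> l2"
  shows "l1 = l2"
proof (rule ccontr)
  assume ne: "l1 \<noteq> l2"
  then obtain P where P: "P \<in> B" "P \<in> l1" "P \<in> l2" using Bline_meet assms(2,3) by blast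
  have "P \<noteq> Q" using P assms(1) by blast
  moreover have "l1 \<in> PG2_lines" "l2 \<in> PG2_lines" using assms(2,3) unfolding Bline_def by auto
  ultimately have "l1 = l2" using line_unique[of l1 l2 P Q] P assms(4,5) by blast
  then show False using ne by blast
qed

lemma exists_out: "\<exists>Q. Q \<in> PG2 \<and> Q \<notin> B"
proof -
  obtain P1 P2 where P: "P1 \<in> B" "P2 \<in> B" "P1 \<noteq> P2" using two_B by blast
  define m where "m = jn P1 P2"
  have mB: "Bline m" "m \<in> PG2_lines" using jnB[OF P] unfolding m_def by auto
  have "\<not> m \<subseteq> B"
  proof
    assume "m \<subseteq> B"
    then have "m \<inter> B = m" by blast
    then have "card m = r + 1" using Bline_card[OF mB(1)] by simp
    moreover have "card m = r^2 + 1" using card_line'[OF mB(2)] cardq by simp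
    ultimately have "r^2 = r" by simp
    then have "r * r = r * 1" by (simp add: power2_eq_square)
    then have "r = 1" using r_ge2 by (subst (asm) mult_left_cancel) auto
    then show False using r_ge2 by simp
  qed
  then obtain Q where "Q \<in> m" "Q \<notin> B" by blast
  then show ?thesis using line_sub[OF mB(2)] by blast
qed

lemma secant_val:
  assumes Q: "Q \<in> PG2" "Q \<notin> B"
  shows "secant_mult B Q = (r^2 + r) div 2"
proof -
  obtain l0 where l0: "Bline l0" "Q \<in> l0" using Bline_through[OF Q] by blast
  define LQ where "LQ = {l \<in> PG2_lines. Q \<in> l}"
  have l0LQ: "l0 \<in> LQ" using l0 unfolding LQ_def Bline_def by auto
  have "secant_mult B Q = (\<Sum>l\<in>LQ. card (l \<inter> B) choose 2)"
    unfolding secant_mult_def LQ_def by simp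
  also have "\<dots> = (card (l0 \<inter> B) choose 2) + (\<Sum>l\<in>LQ - {l0}. card (l \<inter> B) choose 2)"
    using sum.remove[OF _ l0LQ] by simp
  also have "(\<Sum>l\<in>LQ - {l0}. card (l \<inter> B) choose 2) = 0"
  proof (rule sum.neutral, rule ballI)
    fix l assume l: "l \<in> LQ - {l0}"
    then have "l \<in> PG2_lines" "Q \<in> l" "l \<noteq> l0" unfolding LQ_def by auto
    then have "\<not> Bline l" using Bline_uniq[OF Q(2) _ l0(1) _ l0(2)] by blast
    then have "card (l \<inter> B) \<le> 1" using not_Bline_le1 \<open>l \<in> PG2_lines\<close> by blast
    then show "card (l \<inter> B) choose 2 = 0" by simp
  qed
  also have "card (l0 \<inter> B) = r + 1" using Bline_card[OF l0(1)] .
  also have "(r + 1) choose 2 = (r^2 + r) div 2" by (simp add: choose_two power2_eq_square algebra_simps)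
  finally show ?thesis by simp
qed

lemma sum_delta_s:
  fixes S :: "('a^3) set"
  assumes "finite S" "x \<in> S"
  shows "(\<Sum>v\<in>S. (if v = x then a else 0) *s v) = a *s x"
proof -
  have "(\<Sum>v\<in>S. (if v = x then a else 0) *s v) = (\<Sum>v\<in>S. if v = x then a *s x else 0)"
    by (rule sum.cong) auto
  also have "\<dots> = a *s x" using assms by simp
  finally show ?thesis .
qed

lemma spans: "spans_PG2 B"
proof -
  obtain P1 P2 P3 where q: "P1 \<in> B" "P2 \<in> B" "P3 \<in> B" "P1 \<noteq> P2" "P2 \<noteq> P3" "P1 \<noteq> P3" "\<not> collinear3 P1 P2 P3"
    using quad by blast
  have PG: "P1 \<in> PG2" "P2 \<in> PG2" "P3 \<in> PG2" using q B_sub by auto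
  obtain v1 :: "'a^3" where v1: "v1 \<noteq> 0" "P1 = proj_point v1" using PG2_ex[OF PG(1)] by blast
  obtain v2 :: "'a^3" where v2: "v2 \<noteq> 0" "P2 = proj_point v2" using PG2_ex[OF PG(2)] by blast
  obtain v3 :: "'a^3" where v3: "v3 \<noteq> 0" "P3 = proj_point v3" using PG2_ex[OF PG(3)] by blast
  have c12: "cr v1 v2 \<noteq> 0" using cr_nonzero v1 v2 q(4) by blast
  define D where "D = dt v3 (cr v1 v2)"
  have D: "D \<noteq> 0"
  proof
    assume "D = 0"
    then have "dt (cr v1 v2) v3 = 0" unfolding D_def by (metis dt_comm)
    then have "P3 \<in> line_of (cr v1 v2)" using on_line[OF v3(1)] v3(2) by simp
    moreover have "P1 \<in> line_of (cr v1 v2)" "P2 \<in> line_of (cr v1 v2)" using line_cr_mem v1 v2 by auto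
    moreover have "line_of (cr v1 v2) \<in> PG2_lines" using line_cr_in[OF c12] .
    ultimately have "collinear3 P1 P2 P3" unfolding collinear3_def by blast
    then show False using q(7) by blast
  qed
  have reps: "v1 \<in> reps B" "v2 \<in> reps B" "v3 \<in> reps B" using v1 v2 v3 q unfolding reps_def by auto
  have dv: "v1 \<noteq> v2" "v2 \<noteq> v3" "v1 \<noteq> v3" using q v1 v2 v3 by auto
  show ?thesis unfolding spans_PG2_def
  proof
    fix w :: "'a^3"
    define a where "a = dt w (cr v2 v3) / D"
    define b where "b = dt w (cr v3 v1) / D"
    define c where "c = dt w (cr v1 v2) / D"
    have "D *s w = dt w (cr v2 v3) *s v1 + dt w (cr v3 v1) *s v2 + dt w (cr v1 v2) *s v3"
      unfolding D_def by (rule cramer)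
    then have w: "w = a *s v1 + b *s v2 + c *s v3"
      using D unfolding a_def b_def c_def by (simp add: vec3_eq field_simps)
    define f where "f v = (if v = v1 then a else 0) + (if v = v2 then b else 0) + (if v = v3 then c else 0)" for v
    have "(\<Sum>v\<in>reps B. f v *s v) = (\<Sum>v\<in>reps B. (if v = v1 then a else 0) *s v)
       + (\<Sum>v\<in>reps B. (if v = v2 then b else 0) *s v) + (\<Sum>v\<in>reps B. (if v = v3 then c else 0) *s v)"
      unfolding f_def by (simp add: vector_sadd_rdistrib sum.distrib)
    also have "\<dots> = a *s v1 + b *s v2 + c *s v3"
      using sum_delta_s[OF _ reps(1)] sum_delta_s[OF _ reps(2)] sum_delta_s[OF _ reps(3)] by simp
    finally show "\<exists>f. w = (\<Sum>v\<in>reps B. f v *s v)" using w by metis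
  qed
qed

lemma optimal: "optimal_saturating_1mu B (r^2 + r + 1) ((r^2 + r) div 2)"
  unfolding optimal_saturating_1mu_def saturating_1mu_def
  using B_sub card_B spans exists_out secant_val by auto

end

definition syn :: "nat \<Rightarrow> (nat \<Rightarrow> ('a::field)^3) \<Rightarrow> (nat \<Rightarrow> 'a) \<Rightarrow> 'a^3" where
  "syn N h x = (\<Sum>i<N. x i *s h i)"

definition wt :: "nat \<Rightarrow> (nat \<Rightarrow> 'a::zero) \<Rightarrow> nat" where
  "wt N z = card {i. i < N \<and> z i \<noteq> 0}"

definition sg :: "nat \<Rightarrow> 'a::zero \<Rightarrow> nat \<Rightarrow> 'a" where
  "sg i a = (\<lambda>j. if j = i then a else 0)"

lemma syn_add: "syn N h (\<lambda>i. x i + y i) = syn N h x + syn N h y"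
  unfolding syn_def by (simp add: vector_sadd_rdistrib sum.distrib)

lemma syn_diff: "syn N h (\<lambda>i. x i - y i) = syn N h x - syn N h y"
  unfolding syn_def by (simp add: vector_sub_rdistrib sum_subtractf)

lemma syn_scale: "syn N h (\<lambda>i. c * x i) = c *s syn N h x"
  unfolding syn_def by (simp add: vec_eq_iff sum_distrib_left mult.assoc)

lemma syn_zero: "syn N h (\<lambda>i. 0) = 0"
  unfolding syn_def by simp

lemma syn_support:
  assumes "S \<subseteq> {..<N}" "\<And>i. i \<notin> S \<Longrightarrow> z i = 0"
  shows "syn N h z = (\<Sum>i\<in>S. z i *s h i)"
  unfolding syn_def
  by (rule sum.mono_neutral_right) (use assms in \<open>auto intro: finite_subset\<close>)

lemma syn_sg: "i < N \<Longrightarrow> syn N h (sg i a) = a *s h i"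
  by (subst syn_support[of "{i}"]) (auto simp: sg_def)

lemma syn_sg2: "i < N \<Longrightarrow> j < N \<Longrightarrow> i \<noteq> j \<Longrightarrow> syn N h (\<lambda>k. sg i a k + sg j b k) = a *s h i + b *s h j"
  by (simp add: syn_add syn_sg)

lemma words_add: "(x :: nat \<Rightarrow> 'a::field) \<in> words N \<Longrightarrow> y \<in> words N \<Longrightarrow> (\<lambda>i. x i + y i) \<in> words N"
  unfolding words_def by simp
lemma words_diff: "(x :: nat \<Rightarrow> 'a::field) \<in> words N \<Longrightarrow> y \<in> words N \<Longrightarrow> (\<lambda>i. x i - y i) \<in> words N"
  unfolding words_def by simp
lemma words_scale: "(x :: nat \<Rightarrow> 'a::field) \<in> words N \<Longrightarrow> (\<lambda>i. c * x i) \<in> words N"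
  unfolding words_def by simp
lemma words_zero: "(\<lambda>i. 0) \<in> words N"
  unfolding words_def by simp
lemma words_sg: "i < N \<Longrightarrow> sg i a \<in> words N"
  unfolding words_def sg_def by simp

lemma hamming_wt: "hamming N (x :: nat \<Rightarrow> 'a::field) c = wt N (\<lambda>i. x i - c i)"
  unfolding hamming_def wt_def by simp

lemma wt_le: "wt N z \<le> N"
proof -
  have "{i. i < N \<and> z i \<noteq> 0} \<subseteq> {..<N}" by auto
  then have "card {i. i < N \<and> z i \<noteq> 0} \<le> card {..<N}" by (rule card_mono[rotated]) simp
  then show ?thesis unfolding wt_def by simp
qed

lemma wt_support_le:
  assumes "finite S" "\<And>i. i \<notin> S \<Longrightarrow> z i = 0"
  shows "wt N z \<le> card S"
  unfolding wt_def by (rule card_mono) (use assms in auto)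

lemma wt_zero_iff:
  fixes z :: "nat \<Rightarrow> 'a::field"
  assumes "z \<in> words N"
  shows "wt N z = 0 \<longleftrightarrow> z = (\<lambda>i. 0)"
proof
  assume "wt N z = 0"
  then have "{i. i < N \<and> z i \<noteq> 0} = {}" unfolding wt_def by simp
  show "z = (\<lambda>i. 0)"
  proof
    fix i show "z i = 0"
    proof (cases "i < N")
      case True then show ?thesis using \<open>{i. i < N \<and> z i \<noteq> 0} = {}\<close> by blast
    next
      case False then show ?thesis using assms by (simp add: words_def)
    qed
  qed
qed (simp add: wt_def)

lemma small_support:
  assumes "finite S" "card S \<le> 2" "(N::nat) \<ge> 2" "S \<subseteq> {..<N}"
  shows "\<exists>i j. i < N \<and> j < N \<and> i \<noteq> j \<and> S \<subseteq> {i, j}"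
proof -
  have "card S = 0 \<or> card S = 1 \<or> card S = 2" using assms(2) by auto
  then show ?thesis
  proof (elim disjE)
    assume "card S = 0"
    then have "S = {}" using assms(1) by simp
    then show ?thesis using assms(3) by (intro exI[of _ 0] exI[of _ 1]) auto
  next
    assume "card S = 1"
    then obtain i where i: "S = {i}" by (auto simp: card_Suc_eq)
    then have "i < N" using assms(4) by auto
    show ?thesis
    proof (cases "i = 0")
      case True then show ?thesis using i assms(3) by (intro exI[of _ 0] exI[of _ 1]) auto
    next
      case False then show ?thesis using i \<open>i < N\<close> by (intro exI[of _ i] exI[of _ 0]) auto
    qed
  next
    assume "card S = 2"
    then obtain i j where "S = {i, j}" "i \<noteq> j" by (auto simp: card_2_iff)
    then show ?thesis using assms(4) by auto
  qed
qed

lemma wt2_form: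
  fixes z :: "nat \<Rightarrow> 'a::field"
  assumes "z \<in> words N" "wt N z \<le> 2" "N \<ge> 2"
  shows "\<exists>i j. i < N \<and> j < N \<and> i \<noteq> j \<and> z = (\<lambda>k. sg i (z i) k + sg j (z j) k)"
proof -
  let ?S = "{i. i < N \<and> z i \<noteq> 0}"
  obtain i j where ij: "i < N" "j < N" "i \<noteq> j" "?S \<subseteq> {i, j}"
  proof -
    have "finite ?S" by simp
    moreover have "card ?S \<le> 2" using assms(2) unfolding wt_def .
    moreover have "?S \<subseteq> {..<N}" by blast
    ultimately show ?thesis using small_support[of ?S N] assms(3) that by blast
  qed
  have "z = (\<lambda>k. sg i (z i) k + sg j (z j) k)"
  proof
    fix k show "z k = sg i (z i) k + sg j (z j) k"
    proof (cases "k < N")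
      case True then show ?thesis using ij unfolding sg_def by auto
    next
      case False then show ?thesis using assms(1) ij unfolding words_def sg_def by auto
    qed
  qed
  then show ?thesis using ij by blast
qed

lemma card_words: "card (words N :: (nat \<Rightarrow> 'a::{zero,finite}) set) = CARD('a) ^ N"
proof -
  have "bij_betw (\<lambda>x. restrict x {..<N}) (words N :: (nat \<Rightarrow> 'a) set) (PiE {..<N} (\<lambda>_. UNIV))"
  proof (rule bij_betwI[where g = "\<lambda>y i. if i < N then y i else 0"])
    show "(\<lambda>x. restrict x {..<N}) \<in> words N \<rightarrow> (PiE {..<N} (\<lambda>_. UNIV :: 'a set))"
      by (intro Pi_I) (simp add: PiE_iff)
    show "(\<lambda>y i. if i < N then y i else 0) \<in> (PiE {..<N} (\<lambda>_. UNIV :: 'a set)) \<rightarrow> words N"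
      by (intro Pi_I) (simp add: words_def)
    show "(\<lambda>y i. if i < N then y i else 0) (restrict x {..<N}) = x" if "x \<in> words N" for x :: "nat \<Rightarrow> 'a"
    proof
      fix i show "(\<lambda>y i. if i < N then y i else 0) (restrict x {..<N}) i = x i"
        using that by (cases "i < N") (simp_all add: words_def)
    qed
    show "restrict (\<lambda>i. if i < N then y i else 0) {..<N} = y" if "y \<in> PiE {..<N} (\<lambda>_. UNIV :: 'a set)" for y
    proof
      fix i show "restrict (\<lambda>i. if i < N then y i else 0) {..<N} i = y i"
        using that by (cases "i < N") (simp_all add: PiE_iff extensional_def)
    qed
  qed
  then have "card (words N :: (nat \<Rightarrow> 'a) set) = card (PiE {..<N} (\<lambda>_. UNIV :: 'a set))"
    by (rule bij_betw_same_card)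
  also have "\<dots> = CARD('a) ^ N" by (simp add: card_PiE)
  finally show ?thesis .
qed

lemma finite_words: "finite (words N :: (nat \<Rightarrow> 'a::{zero,finite}) set)"
proof (rule ccontr)
  assume "infinite (words N :: (nat \<Rightarrow> 'a) set)"
  then have "card (words N :: (nat \<Rightarrow> 'a) set) = 0" by (rule card.infinite)
  moreover have "CARD('a) \<noteq> 0" by (simp add: card_eq_0_iff)
  ultimately show False unfolding card_words by simp
qed


lemma noncol_D:
  fixes v1 v2 v3 :: "'a::{field,finite}^3"
  assumes "v1 \<noteq> 0" "v2 \<noteq> 0" "v3 \<noteq> 0" "proj_point v1 \<noteq> proj_point v2"
    "\<not> collinear3 (proj_point v1) (proj_point v2) (proj_point v3)"
  shows "dt v3 (cr v1 v2) \<noteq> 0"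
proof
  assume "dt v3 (cr v1 v2) = 0"
  then have "dt (cr v1 v2) v3 = 0" by (metis dt_comm)
  then have "proj_point v3 \<in> line_of (cr v1 v2)" using on_line[OF assms(3)] by simp
  moreover have c12: "cr v1 v2 \<noteq> 0" using cr_nonzero assms by blast
  moreover have "proj_point v1 \<in> line_of (cr v1 v2)" "proj_point v2 \<in> line_of (cr v1 v2)"
    using line_cr_mem assms by auto
  moreover have "line_of (cr v1 v2) \<in> PG2_lines" using line_cr_in[OF c12] .
  ultimately have "collinear3 (proj_point v1) (proj_point v2) (proj_point v3)" unfolding collinear3_def by blast
  then show False using assms(5) by blast
qed

lemma cramer_solve:
  fixes v1 v2 v3 :: "'a::field^3"
  assumes "dt v3 (cr v1 v2) \<noteq> 0"
  shows "\<exists>a b c. w = a *s v1 + b *s v2 + c *s v3"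
proof -
  define D where "D = dt v3 (cr v1 v2)"
  have "D *s w = dt w (cr v2 v3) *s v1 + dt w (cr v3 v1) *s v2 + dt w (cr v1 v2) *s v3"
    unfolding D_def by (rule cramer)
  then have "w = (dt w (cr v2 v3) / D) *s v1 + (dt w (cr v3 v1) / D) *s v2 + (dt w (cr v1 v2) / D) *s v3"
    using assms unfolding D_def[symmetric] by (simp add: vec3_eq field_simps)
  then show ?thesis by blast
qed

lemma pp_mult:
  fixes v :: "'a::field^3"
  assumes "s \<noteq> 0" "s = a *s v"
  shows "proj_point s = proj_point v"
proof -
  have "a \<noteq> 0" using assms by auto
  then have "s \<in> proj_point v" using assms(2) unfolding pp_mem by blast
  then show ?thesis by (rule pp_eq)
qed

locale code = baer +
  fixes h :: "nat \<Rightarrow> 'a^3"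
  assumes cols: "columns_of B (r^2 + r + 1) h"
begin

definition N :: nat where "N = r^2 + r + 1"
abbreviation "CC \<equiv> parity_check_code N h"

lemma h_nz: "i < N \<Longrightarrow> h i \<noteq> 0"
  using cols unfolding columns_of_def N_def by blast

lemma h_B: "i < N \<Longrightarrow> proj_point (h i) \<in> B"
  using cols unfolding columns_of_def N_def by blast

lemma h_inj: "i < N \<Longrightarrow> j < N \<Longrightarrow> proj_point (h i) = proj_point (h j) \<Longrightarrow> i = j"
  using cols unfolding columns_of_def inj_on_def N_def by blast

lemma B_h: "P \<in> B \<Longrightarrow> \<exists>i<N. P = proj_point (h i)"
  using cols unfolding columns_of_def N_def by blast

lemma N_ge: "N \<ge> 3" using r_ge2 unfolding N_def by simp

lemma CC_iff: "x \<in> CC \<longleftrightarrow> x \<in> words N \<and> syn N h x = 0"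
  unfolding parity_check_code_def syn_def by simp

lemma indep2:
  assumes "i < N" "j < N" "i \<noteq> j" "a *s h i + b *s h j = 0"
  shows "a = 0 \<and> b = 0"
proof -
  have a: "a = 0"
  proof (rule ccontr)
    assume a: "a \<noteq> 0"
    have "h i = (- b / a) *s h j" using assms(4) a
      by (simp add: vec3_eq field_simps) (metis add_eq_0_iff2 vector_smult_component zero_index mult.commute)
    then have "proj_point (h i) = proj_point (h j)" using pp_mult h_nz assms(1) by blast
    then show False using h_inj assms by blast
  qed
  then have "b *s h j = 0" using assms(4) by simp
  then have "b = 0" using h_nz[OF assms(2)] by simp
  then show ?thesis using a by simp
qed

lemma wt_ge3:
  assumes "z \<in> CC" "z \<noteq> (\<lambda>i. 0)"
  shows "wt N z \<ge> 3"
proof (rule ccontr)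
  assume "\<not> wt N z \<ge> 3"
  then have w2: "wt N z \<le> 2" by simp
  have zw: "z \<in> words N" "syn N h z = 0" using assms(1) CC_iff by auto
  obtain i j where ij: "i < N" "j < N" "i \<noteq> j" "z = (\<lambda>k. sg i (z i) k + sg j (z j) k)"
    using wt2_form[OF zw(1) w2] N_ge by auto
  have "syn N h z = z i *s h i + z j *s h j" using ij syn_sg2 by metis
  then have "z i = 0 \<and> z j = 0" using indep2[OF ij(1-3)] zw(2) by simp
  then have "z = (\<lambda>k. 0)" using ij(4) by (simp add: sg_def)
  then show False using assms(2) by blast
qed

lemma surj_syn: "\<exists>x\<in>words N. syn N h x = s"
proof -
  obtain P1 P2 P3 where q: "P1 \<in> B" "P2 \<in> B" "P3 \<in> B" "P1 \<noteq> P2" "P2 \<noteq> P3" "P1 \<noteq> P3" "\<not> collinear3 P1 P2 P3"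
    using quad by blast
  obtain i1 where i1: "i1 < N" "P1 = proj_point (h i1)" using B_h q(1) by blast
  obtain i2 where i2: "i2 < N" "P2 = proj_point (h i2)" using B_h q(2) by blast
  obtain i3 where i3: "i3 < N" "P3 = proj_point (h i3)" using B_h q(3) by blast
  have ne: "i1 \<noteq> i2" "i2 \<noteq> i3" "i1 \<noteq> i3" using q i1 i2 i3 by auto
  have "dt (h i3) (cr (h i1) (h i2)) \<noteq> 0"
    using noncol_D[of "h i1" "h i2" "h i3"] h_nz i1 i2 i3 q by simp
  then obtain a b c where s: "s = a *s h i1 + b *s h i2 + c *s h i3" using cramer_solve by blast
  define x where "x = (\<lambda>k. (\<lambda>k. sg i1 a k + sg i2 b k) k + sg i3 c k)"
  have "x \<in> words N" unfolding x_def by (intro words_add words_sg i1 i2 i3)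
  moreover have "syn N h x = s" unfolding x_def syn_add syn_sg[OF i1(1)] syn_sg[OF i2(1)] syn_sg[OF i3(1)] s by (rule refl)
  ultimately show ?thesis by blast
qed

lemma linear: "linear_code N CC"
  unfolding linear_code_def
proof (intro conjI ballI allI)
  show "CC \<subseteq> words N" using CC_iff by blast
  show "(\<lambda>_. 0) \<in> CC" using CC_iff words_zero syn_zero by blast
  show "(\<lambda>i. x i + y i) \<in> CC" if "x \<in> CC" "y \<in> CC" for x y
    using that CC_iff words_add syn_add by (metis add_0)
  show "(\<lambda>i. c * x i) \<in> CC" if "x \<in> CC" for c x
    using that CC_iff words_scale syn_scale by (metis vector_smult_rzero)
qed

lemma card_CC: "card CC = CARD('a) ^ (N - 3)"
proof -
  have "card (words N :: (nat \<Rightarrow> 'a) set) = card (UNIV :: ('a^3) set) * card CC"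
  proof (rule fiber_card[where f = "syn N h"])
    show "finite (words N :: (nat \<Rightarrow> 'a) set)" by (rule finite_words)
    fix y :: "'a^3"
    obtain t where t: "t \<in> words N" "syn N h t = y" using surj_syn by blast
    have "bij_betw (\<lambda>x i. x i + t i) CC {x \<in> words N. syn N h x = y}"
    proof (rule bij_betwI[where g = "\<lambda>x i. x i - t i"])
      show "(\<lambda>x i. x i + t i) \<in> CC \<rightarrow> {x \<in> words N. syn N h x = y}"
        using t CC_iff words_add by (auto simp: syn_add)
      show "(\<lambda>x i. x i - t i) \<in> {x \<in> words N. syn N h x = y} \<rightarrow> CC"
        using t CC_iff words_diff by (auto simp: syn_diff)
    qed auto
    then show "card {x \<in> words N. syn N h x = y} = card CC" by (simp add: bij_betw_same_card)
  qed auto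
  then have "CARD('a) ^ N = CARD('a) ^ 3 * card CC" by (simp add: card_words)
  moreover have "CARD('a) ^ N = CARD('a) ^ 3 * CARD('a) ^ (N - 3)"
    using N_ge by (simp add: power_add[symmetric])
  moreover have "CARD('a) ^ 3 \<noteq> 0" by (simp add: card_eq_0_iff)
  ultimately show ?thesis by simp
qed

end

context code
begin

lemma wt3_exists: "\<exists>z\<in>CC. z \<noteq> (\<lambda>i. 0) \<and> wt N z = 3"
proof -
  obtain P1 P2 where P: "P1 \<in> B" "P2 \<in> B" "P1 \<noteq> P2" using two_B by blast
  obtain i where i: "i < N" "P1 = proj_point (h i)" using B_h P(1) by blast
  obtain j where j: "j < N" "P2 = proj_point (h j)" using B_h P(2) by blast
  have ij: "i \<noteq> j" using i j P(3) by blast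
  define m where "m = jn P1 P2"
  have m: "m \<in> PG2_lines" "P1 \<in> m" "P2 \<in> m" "Bline m" using jnB[OF P] unfolding m_def by auto
  have sub: "{P1, P2} \<subseteq> m \<inter> B" using m P by auto
  have "card (m \<inter> B - {P1, P2}) = card (m \<inter> B) - card {P1, P2}"
    by (rule card_Diff_subset) (use sub in auto)
  also have "\<dots> = r + 1 - 2" using Bline_card[OF m(4)] P(3) by simp
  finally have "card (m \<inter> B - {P1, P2}) \<ge> 1" using r_ge2 by simp
  then have "m \<inter> B - {P1, P2} \<noteq> {}" by (metis card.empty not_one_le_zero)
  then obtain P3 where P3: "P3 \<in> m" "P3 \<in> B" "P3 \<noteq> P1" "P3 \<noteq> P2" by blast
  obtain k where k: "k < N" "P3 = proj_point (h k)" using B_h P3(2) by blast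
  have ki: "k \<noteq> i" "k \<noteq> j" using k i j P3 by auto
  have neq: "proj_point (h i) \<noteq> proj_point (h j)" using i(2) j(2) P(3) by simp
  have mi: "proj_point (h i) \<in> m" "proj_point (h j) \<in> m" "proj_point (h k) \<in> m"
    using m(2,3) P3(1) i(2) j(2) k(2) by simp_all
  obtain a b where hk: "h k = a *s h i + b *s h j"
    using span2[OF m(1) h_nz[OF i(1)] h_nz[OF j(1)] neq mi(1,2) h_nz[OF k(1)] mi(3)] by blast
  define z where "z = (\<lambda>t. (\<lambda>t. sg i a t + sg j b t) t + sg k (-1) t)"
  have zw: "z \<in> words N" unfolding z_def by (intro words_add words_sg i(1) j(1) k(1))
  have "syn N h z = a *s h i + b *s h j + (-1) *s h k"
    unfolding z_def syn_add syn_sg[OF i(1)] syn_sg[OF j(1)] syn_sg[OF k(1)] by (rule refl)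
  also have "\<dots> = 0" unfolding hk by (simp add: vec3_eq)
  finally have zC: "z \<in> CC" using zw CC_iff by blast
  have "z k = -1" unfolding z_def sg_def using ki by simp
  then have znz: "z \<noteq> (\<lambda>i. 0)" by (metis neg_equal_0_iff_equal one_neq_zero)
  have "wt N z \<le> card {i, j, k}"
    by (rule wt_support_le) (auto simp: z_def sg_def)
  also have "\<dots> \<le> 3" by (rule c3)
  finally have "wt N z = 3" using wt_ge3[OF zC znz] by simp
  then show ?thesis using zC znz by blast
qed

lemma diff_in_CC:
  assumes "x \<in> CC" "y \<in> CC"
  shows "(\<lambda>i. x i - y i) \<in> CC"
proof -
  have x: "x \<in> words N" "syn N h x = 0" using assms(1) CC_iff by blast+
  have y: "y \<in> words N" "syn N h y = 0" using assms(2) CC_iff by blast+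
  have "(\<lambda>i. x i - y i) \<in> words N" by (rule words_diff[OF x(1) y(1)])
  moreover have "syn N h (\<lambda>i. x i - y i) = 0" unfolding syn_diff x(2) y(2) by simp
  ultimately show ?thesis using CC_iff by blast
qed

lemma zero_CC: "(\<lambda>i. 0) \<in> CC"
  unfolding CC_iff by (rule conjI[OF words_zero syn_zero])

lemma min_dist3: "min_dist N CC = 3"
proof -
  let ?M = "{hamming N x y | x y. x \<in> CC \<and> y \<in> CC \<and> x \<noteq> y}"
  have fin: "finite ?M"
  proof (rule finite_subset)
    show "?M \<subseteq> {..N}"
    proof
      fix m assume "m \<in> ?M"
      then obtain x y where "m = hamming N x y" "x \<in> CC" "y \<in> CC" by blast
      then have "m = wt N (\<lambda>i. x i - y i)" unfolding hamming_wt by simp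
      then show "m \<in> {..N}" using wt_le[of N] by simp
    qed
  qed simp
  have ge: "m \<ge> 3" if mM: "m \<in> ?M" for m
  proof -
    obtain x y where xy: "m = hamming N x y" "x \<in> CC" "y \<in> CC" "x \<noteq> y" using mM by blast
    have "(\<lambda>i. x i - y i) \<noteq> (\<lambda>i. 0)"
    proof
      assume d: "(\<lambda>i. x i - y i) = (\<lambda>i. 0)"
      have "x = y"
      proof
        fix i show "x i = y i" using fun_cong[OF d, of i] by simp
      qed
      then show False using xy(4) by blast
    qed
    then have "wt N (\<lambda>i. x i - y i) \<ge> 3" by (rule wt_ge3[OF diff_in_CC[OF xy(2,3)]])
    then show ?thesis using xy(1) unfolding hamming_wt by simp
  qed
  obtain z where z: "z \<in> CC" "z \<noteq> (\<lambda>i. 0)" "wt N z = 3" using wt3_exists by blast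
  have h3: "hamming N z (\<lambda>i. 0) = 3" unfolding hamming_wt using z(3) by simp
  have "hamming N z (\<lambda>i. 0) \<in> ?M" using z(1,2) zero_CC by blast
  then have three: "3 \<in> ?M" unfolding h3 .
  have "Min ?M = 3"
  proof (rule Min_eqI)
    show "finite ?M" by (rule fin)
    fix y assume "y \<in> ?M" then show "y \<ge> 3" by (rule ge)
  next
    show "3 \<in> ?M" by (rule three)
  qed
  then show ?thesis unfolding min_dist_def .
qed


lemma finite_CC: "finite CC"
  using finite_subset[OF _ finite_words] CC_iff by blast

lemma dist_le:
  assumes x: "x \<in> words N" and e: "e \<in> words N" "syn N h e = syn N h x" "wt N e \<le> k"
  shows "dist_to_code N CC x \<le> k"
proof -
  define c where "c = (\<lambda>i. x i - e i)"
  have "c \<in> words N" unfolding c_def by (rule words_diff[OF x e(1)])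
  moreover have "syn N h c = 0" unfolding c_def syn_diff e(2) by simp
  ultimately have cC: "c \<in> CC" using CC_iff by blast
  have "hamming N x c = wt N e" unfolding c_def hamming_wt by simp
  then have "hamming N x c \<le> k" using e(3) by simp
  moreover have "hamming N x c \<in> {hamming N x c | c. c \<in> CC}" using cC by blast
  moreover have "finite {hamming N x c | c. c \<in> CC}" using finite_CC by simp
  ultimately show ?thesis unfolding dist_to_code_def by (meson Min_le order_trans)
qed

lemma dist_ge:
  assumes x: "x \<in> words N" and e: "\<And>e. e \<in> words N \<Longrightarrow> syn N h e = syn N h x \<Longrightarrow> wt N e \<ge> k"
  shows "dist_to_code N CC x \<ge> k"
  unfolding dist_to_code_def
proof (rule Min.boundedI)
  show "finite {hamming N x c | c. c \<in> CC}" using finite_CC by simp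
  show "{hamming N x c | c. c \<in> CC} \<noteq> {}" using zero_CC by blast
  fix a assume "a \<in> {hamming N x c | c. c \<in> CC}"
  then obtain c where c: "a = hamming N x c" "c \<in> CC" by blast
  have cw: "c \<in> words N" "syn N h c = 0" using c(2) CC_iff by blast+
  have "(\<lambda>i. x i - c i) \<in> words N" by (rule words_diff[OF x cw(1)])
  moreover have "syn N h (\<lambda>i. x i - c i) = syn N h x" unfolding syn_diff cw(2) by simp
  ultimately show "k \<le> a" using e c(1) hamming_wt by metis
qed

lemma low1:
  assumes "s = 0 \<or> (s \<noteq> 0 \<and> proj_point s \<in> B)"
  shows "\<exists>e\<in>words N. syn N h e = s \<and> wt N e \<le> 1"
  using assms
proof (elim disjE conjE)
  assume "s = 0"
  moreover have "wt N (\<lambda>i. 0) \<le> 1" unfolding wt_def by simp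
  ultimately show ?thesis using words_zero syn_zero by metis
next
  assume s: "s \<noteq> 0" "proj_point s \<in> B"
  obtain i where i: "i < N" "proj_point s = proj_point (h i)" using B_h s(2) by blast
  then have "s \<in> proj_point (h i)" using pp_eq_iff by blast
  then obtain a where a: "s = a *s h i" unfolding pp_mem by blast
  have "wt N (sg i a) \<le> card {i}" by (rule wt_support_le) (auto simp: sg_def)
  then have "wt N (sg i a) \<le> 1" by simp
  moreover have "syn N h (sg i a) = s" using syn_sg[OF i(1)] a by simp
  ultimately show ?thesis using words_sg[OF i(1)] by blast
qed

lemma low2:
  assumes s: "s \<noteq> 0" "proj_point s \<notin> B"
  shows "\<exists>e\<in>words N. syn N h e = s \<and> wt N e \<le> 2"
proof -
  have Q: "proj_point s \<in> PG2" using PG2_I[OF s(1)] .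
  obtain l where l: "Bline l" "proj_point s \<in> l" using Bline_through[OF Q s(2)] by blast
  have "card (l \<inter> B) \<ge> 2" using l(1) Bline_def by blast
  then obtain P P' where PP: "P \<in> l \<inter> B" "P' \<in> l \<inter> B" "P \<noteq> P'" using two_pts by blast
  obtain i where i: "i < N" "P = proj_point (h i)" using B_h PP(1) by blast
  obtain j where j: "j < N" "P' = proj_point (h j)" using B_h PP(2) by blast
  have ij: "i \<noteq> j" using i j PP(3) by blast
  have lL: "l \<in> PG2_lines" using l(1) Bline_def by blast
  obtain a b where ab: "s = a *s h i + b *s h j"
    using span2[OF lL h_nz[OF i(1)] h_nz[OF j(1)]] i j PP s(1) l(2) by blast
  define e where "e = (\<lambda>k. sg i a k + sg j b k)"
  have "e \<in> words N" unfolding e_def by (intro words_add words_sg i(1) j(1))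
  moreover have "syn N h e = s" unfolding e_def syn_sg2[OF i(1) j(1) ij] ab ..
  moreover have w1: "wt N e \<le> card {i, j}" by (rule wt_support_le) (auto simp: e_def sg_def)
  have "card {i, j} \<le> 2" by (simp add: card_insert_if)
  then have "wt N e \<le> 2" using w1 by linarith
  ultimately show ?thesis by blast
qed

lemma no1:
  assumes s: "s \<noteq> 0" "proj_point s \<notin> B" and e: "e \<in> words N" "syn N h e = s"
  shows "wt N e \<ge> 2"
proof (rule ccontr)
  assume "\<not> wt N e \<ge> 2"
  then have w: "card {i. i < N \<and> e i \<noteq> 0} \<le> 1" unfolding wt_def by simp
  let ?S = "{i. i < N \<and> e i \<noteq> 0}"
  have out: "e i = 0" if "i \<notin> ?S" for i
  proof (cases "i < N")
    case True then show ?thesis using that by blast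
  next
    case False then show ?thesis using e(1) by (simp add: words_def)
  qed
  have "card ?S = 0 \<or> card ?S = 1" using w by (simp add: le_Suc_eq)
  then show False
  proof
    assume "card ?S = 0"
    then have S0: "?S = {}" by simp
    have "e = (\<lambda>i. 0)"
    proof
      fix i show "e i = 0" using out S0 by blast
    qed
    then have "syn N h e = 0" using syn_zero by simp
    then show False using e(2) s(1) by simp
  next
    assume "card ?S = 1"
    then obtain i where Si: "?S = {i}" by (rule card_1_singletonE)
    then have i: "i < N" by blast
    have out1: "e k = 0" if "k \<notin> {i}" for k using out that unfolding Si by blast
    have "syn N h e = (\<Sum>k\<in>{i}. e k *s h k)" by (rule syn_support[OF _ out1]) (use i in simp)
    then have "s = e i *s h i" using e(2) by simp
    then have "proj_point s = proj_point (h i)" by (rule pp_mult[OF s(1)])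
    then show False using h_B[OF i] s(2) by simp
  qed
qed

lemma dist_le2: "x \<in> words N \<Longrightarrow> dist_to_code N CC x \<le> 2"
proof -
  assume x: "x \<in> words N"
  let ?s = "syn N h x"
  show ?thesis
  proof (cases "?s = 0 \<or> (?s \<noteq> 0 \<and> proj_point ?s \<in> B)")
    case True
    then obtain e where "e \<in> words N" "syn N h e = ?s" "wt N e \<le> 1" using low1 by blast
    then have "dist_to_code N CC x \<le> 1" using dist_le[OF x] by blast
    then show ?thesis by simp
  next
    case False
    then obtain e where "e \<in> words N" "syn N h e = ?s" "wt N e \<le> 2" using low2 by blast
    then show ?thesis using dist_le[OF x] by blast
  qed
qed

lemma cov_radius: "covering_radius N CC = 2"
proof -
  obtain Q where Q: "Q \<in> PG2" "Q \<notin> B" using exists_out by blast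
  obtain s :: "'a^3" where s: "s \<noteq> 0" "Q = proj_point s" using PG2_ex[OF Q(1)] by blast
  obtain x0 where x0: "x0 \<in> words N" "syn N h x0 = s" using surj_syn by blast
  have "dist_to_code N CC x0 \<ge> 2"
    using dist_ge[OF x0(1)] no1 s Q(2) x0(2) by metis
  then have d0: "dist_to_code N CC x0 = 2" using dist_le2[OF x0(1)] by simp
  have eq: "{dist_to_code N CC x | x. x \<in> words N} = (\<lambda>x. dist_to_code N CC x) ` words N" by blast
  show ?thesis unfolding covering_radius_def
  proof (rule Max_eqI)
    show "finite {dist_to_code N CC x | x. x \<in> words N}" unfolding eq using finite_words by blast
    show "y \<le> 2" if "y \<in> {dist_to_code N CC x | x. x \<in> words N}" for y using that dist_le2 by blast
    show "2 \<in> {dist_to_code N CC x | x. x \<in> words N}" using d0 x0(1) by force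
  qed
qed

end

context code
begin

lemma dist2_props:
  assumes x: "x \<in> words N" and d: "dist_to_code N CC x = 2"
  shows "syn N h x \<noteq> 0 \<and> proj_point (syn N h x) \<notin> B"
proof (rule ccontr)
  assume "\<not> ?thesis"
  then have "syn N h x = 0 \<or> (syn N h x \<noteq> 0 \<and> proj_point (syn N h x) \<in> B)" by blast
  then obtain e where "e \<in> words N" "syn N h e = syn N h x" "wt N e \<le> 1" using low1 by blast
  then have "dist_to_code N CC x \<le> 1" using dist_le[OF x] by blast
  then show False using d by simp
qed

definition supp :: "(nat \<Rightarrow> 'a) \<Rightarrow> nat set" where
  "supp e = {i. i < N \<and> e i \<noteq> 0}"

lemma count:
  assumes x: "x \<in> words N" and d: "dist_to_code N CC x = 2"
  shows "card {c \<in> CC. hamming N x c = 2} = (r^2 + r) div 2"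
proof -
  define s where "s = syn N h x"
  have s: "s \<noteq> 0" "proj_point s \<notin> B" using dist2_props[OF x d] unfolding s_def by auto
  have Q: "proj_point s \<in> PG2" using PG2_I[OF s(1)] .
  obtain l0 where l0: "Bline l0" "proj_point s \<in> l0" using Bline_through[OF Q s(2)] by blast
  have l0L: "l0 \<in> PG2_lines" using l0(1) unfolding Bline_def by blast
  define I where "I = {i. i < N \<and> proj_point (h i) \<in> l0}"
  have "bij_betw (\<lambda>i. proj_point (h i)) I (l0 \<inter> B)"
  proof (rule bij_betw_imageI)
    show "inj_on (\<lambda>i. proj_point (h i)) I"
      by (rule inj_onI) (use h_inj in \<open>auto simp: I_def\<close>)
    show "(\<lambda>i. proj_point (h i)) ` I = l0 \<inter> B"
    proof
      show "(\<lambda>i. proj_point (h i)) ` I \<subseteq> l0 \<inter> B" using h_B unfolding I_def by auto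
      show "l0 \<inter> B \<subseteq> (\<lambda>i. proj_point (h i)) ` I"
      proof
        fix P assume P: "P \<in> l0 \<inter> B"
        then obtain i where "i < N" "P = proj_point (h i)" using B_h by blast
        then show "P \<in> (\<lambda>i. proj_point (h i)) ` I" using P unfolding I_def by blast
      qed
    qed
  qed
  then have cardI: "card I = r + 1" using Bline_card[OF l0(1)] bij_betw_same_card by metis
  have finI: "finite I" unfolding I_def by simp
  define A where "A = {c \<in> CC. hamming N x c = 2}"
  define E where "E = {e \<in> words N. syn N h e = s \<and> wt N e = 2}"
  define T2 where "T2 = {T. T \<subseteq> I \<and> card T = 2}"
  have bAE: "bij_betw (\<lambda>c i. x i - c i) A E"
  proof (rule bij_betwI[where g = "\<lambda>e i. x i - e i"])
    show "(\<lambda>c i. x i - c i) \<in> A \<rightarrow> E"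
    proof
      fix c assume c: "c \<in> A"
      then have cC: "c \<in> words N" "syn N h c = 0" "hamming N x c = 2" using CC_iff unfolding A_def by auto
      have "(\<lambda>i. x i - c i) \<in> words N" by (rule words_diff[OF x cC(1)])
      moreover have "syn N h (\<lambda>i. x i - c i) = s" unfolding syn_diff s_def cC(2) by simp
      moreover have "wt N (\<lambda>i. x i - c i) = 2" using cC(3) unfolding hamming_wt .
      ultimately show "(\<lambda>i. x i - c i) \<in> E" unfolding E_def by blast
    qed
    show "(\<lambda>e i. x i - e i) \<in> E \<rightarrow> A"
    proof
      fix e assume e: "e \<in> E"
      then have ew: "e \<in> words N" "syn N h e = s" "wt N e = 2" unfolding E_def by auto
      have "(\<lambda>i. x i - e i) \<in> words N" by (rule words_diff[OF x ew(1)])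
      moreover have "syn N h (\<lambda>i. x i - e i) = 0" unfolding syn_diff s_def[symmetric] ew(2) by simp
      ultimately have "(\<lambda>i. x i - e i) \<in> CC" using CC_iff by blast
      moreover have "hamming N x (\<lambda>i. x i - e i) = 2" unfolding hamming_wt using ew(3) by simp
      ultimately show "(\<lambda>i. x i - e i) \<in> A" unfolding A_def by blast
    qed
  qed auto
  have suppE: "card (supp e) = 2" "supp e \<subseteq> I" if e: "e \<in> E" for e
  proof -
    have ew: "e \<in> words N" "syn N h e = s" "wt N e = 2" using e unfolding E_def by auto
    show c2: "card (supp e) = 2" using ew(3) unfolding wt_def supp_def .
    then obtain i j where ij: "supp e = {i, j}" "i \<noteq> j" by (auto simp: card_2_iff)
    then have ijN: "i < N" "j < N" "e i \<noteq> 0" "e j \<noteq> 0" unfolding supp_def by blast+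
    have out: "e k = 0" if "k \<notin> {i, j}" for k
    proof (cases "k < N")
      case True then show ?thesis using that ij(1) unfolding supp_def by blast
    next
      case False then show ?thesis using ew(1) by (simp add: words_def)
    qed
    have "syn N h e = (\<Sum>k\<in>{i, j}. e k *s h k)" by (rule syn_support[OF _ out]) (use ijN in simp)
    then have se: "s = e i *s h i + e j *s h j" using ew(2) ij(2) by simp
    have pne: "proj_point (h i) \<noteq> proj_point (h j)" using h_inj ijN(1,2) ij(2) by blast
    have crn: "cr (h i) (h j) \<noteq> 0" using cr_nonzero[OF h_nz[OF ijN(1)] h_nz[OF ijN(2)] pne] .
    have "dt (cr (h i) (h j)) s = e i * dt (h i) (cr (h i) (h j)) + e j * dt (h j) (cr (h i) (h j))"
      unfolding se by (simp add: dt_comm)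
    then have "dt (cr (h i) (h j)) s = 0" by simp
    then have sL: "proj_point s \<in> line_of (cr (h i) (h j))" using on_line[OF s(1)] by simp
    have LL: "line_of (cr (h i) (h j)) \<in> PG2_lines" by (rule line_cr_in[OF crn])
    have mem: "proj_point (h i) \<in> line_of (cr (h i) (h j))" "proj_point (h j) \<in> line_of (cr (h i) (h j))"
      using line_cr_mem[OF h_nz[OF ijN(1)] h_nz[OF ijN(2)]] by auto
    have "2 \<le> card (line_of (cr (h i) (h j)) \<inter> B)"
      by (rule pts_two[of "proj_point (h i)" _ "proj_point (h j)"]) (use mem h_B ijN pne in auto)
    then have "Bline (line_of (cr (h i) (h j)))" using LL unfolding Bline_def by blast
    then have "line_of (cr (h i) (h j)) = l0" using Bline_uniq[OF s(2) _ l0(1) sL l0(2)] by blast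
    then show "supp e \<subseteq> I" using mem ijN ij(1) unfolding I_def by auto
  qed
  have bET: "bij_betw supp E T2"
  proof (rule bij_betw_imageI)
    show "inj_on supp E"
    proof (rule inj_onI)
      fix e e' assume ee: "e \<in> E" "e' \<in> E" "supp e = supp e'"
      have ew: "e \<in> words N" "syn N h e = s" using ee(1) unfolding E_def by auto
      have ew': "e' \<in> words N" "syn N h e' = s" using ee(2) unfolding E_def by auto
      define d where "d = (\<lambda>i. e i - e' i)"
      have "d \<in> words N" unfolding d_def by (rule words_diff[OF ew(1) ew'(1)])
      moreover have "syn N h d = 0" unfolding d_def syn_diff ew(2) ew'(2) by simp
      ultimately have dC: "d \<in> CC" using CC_iff by blast
      have dout: "d i = 0" if "i \<notin> supp e" for i
      proof (cases "i < N")
        case True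
        then have "e i = 0" "e' i = 0" using that ee(3) unfolding supp_def by auto
        then show ?thesis unfolding d_def by simp
      next
        case False then show ?thesis using ew(1) ew'(1) unfolding d_def by (simp add: words_def)
      qed
      have "wt N d \<le> card (supp e)" by (rule wt_support_le) (use dout in \<open>auto simp: supp_def\<close>)
      then have "wt N d \<le> 2" using suppE(1)[OF ee(1)] by simp
      then have "d = (\<lambda>i. 0)" using wt_ge3[OF dC] by (cases "d = (\<lambda>i. 0)") auto
      show "e = e'"
      proof
        fix i show "e i = e' i" using fun_cong[OF \<open>d = (\<lambda>i. 0)\<close>, of i] unfolding d_def by simp
      qed
    qed
    show "supp ` E = T2"
    proof
      show "supp ` E \<subseteq> T2" using suppE unfolding T2_def by blast
      show "T2 \<subseteq> supp ` E"
      proof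
        fix T assume "T \<in> T2"
        then have T: "T \<subseteq> I" "card T = 2" unfolding T2_def by auto
        then obtain i j where ij: "T = {i, j}" "i \<noteq> j" by (auto simp: card_2_iff)
        then have ijI: "i < N" "j < N" "proj_point (h i) \<in> l0" "proj_point (h j) \<in> l0"
          using T(1) unfolding I_def by auto
        have pne: "proj_point (h i) \<noteq> proj_point (h j)" using h_inj ijI(1,2) ij(2) by blast
        obtain a b where ab: "s = a *s h i + b *s h j"
          using span2[OF l0L h_nz[OF ijI(1)] h_nz[OF ijI(2)] pne ijI(3,4) s(1) l0(2)] by blast
        have a: "a \<noteq> 0"
        proof
          assume "a = 0"
          then have "s = b *s h j" using ab by simp
          then have "proj_point s = proj_point (h j)" by (rule pp_mult[OF s(1)])
          then show False using s(2) h_B[OF ijI(2)] by simp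
        qed
        have b: "b \<noteq> 0"
        proof
          assume "b = 0"
          then have "s = a *s h i" using ab by simp
          then have "proj_point s = proj_point (h i)" by (rule pp_mult[OF s(1)])
          then show False using s(2) h_B[OF ijI(1)] by simp
        qed
        define e where "e = (\<lambda>k. sg i a k + sg j b k)"
        have ew: "e \<in> words N" unfolding e_def by (intro words_add words_sg ijI(1,2))
        have es: "syn N h e = s" unfolding e_def syn_sg2[OF ijI(1,2) ij(2)] ab ..
        have se: "supp e = {i, j}" unfolding supp_def e_def sg_def using a b ij(2) ijI(1,2) by auto
        have "wt N e = 2" using se ij(2) unfolding supp_def wt_def by simp
        then have "e \<in> E" unfolding E_def using ew es by blast
        then show "T \<in> supp ` E" using se ij(1) by blast
      qed
    qed
  qed
  have "card A = card E" using bAE by (rule bij_betw_same_card)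
  also have "\<dots> = card T2" using bET by (rule bij_betw_same_card)
  also have "\<dots> = card I choose 2" unfolding T2_def by (rule n_subsets[OF finI])
  also have "\<dots> = (r^2 + r) div 2" unfolding cardI by (simp add: choose_two power2_eq_square algebra_simps)
  finally show ?thesis unfolding A_def .
qed

lemma apmcf: "APMCF N CC 2 ((r^2 + r) div 2)"
  unfolding APMCF_def using cov_radius count by blast

end

theorem proposition5p4:
  fixes B :: "(('a::{field,finite}) ^ 3) set set" and r :: nat
  assumes "CARD('a) = r ^ 2"
    and "baer_subplane B"
  shows "optimal_saturating_1mu B (r ^ 2 + r + 1) ((r ^ 2 + r) div 2)
     \<and> (\<forall>h. columns_of B (r ^ 2 + r + 1) h \<longrightarrow>
          nkd_code (r ^ 2 + r + 1) (r ^ 2 + r + 1 - 3) 3 (parity_check_code (r ^ 2 + r + 1) h)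
          \<and> covering_radius (r ^ 2 + r + 1) (parity_check_code (r ^ 2 + r + 1) h) = 2
          \<and> APMCF (r ^ 2 + r + 1) (parity_check_code (r ^ 2 + r + 1) h) 2 ((r ^ 2 + r) div 2))"
proof -
  obtain r' where r': "CARD('a) = r' ^ 2" "subplane_of_order B r'"
    using assms(2) unfolding baer_subplane_def by (elim exE conjE) (rule that)
  have "r'^2 = r^2" using r'(1) assms(1) by simp
  then have "r' = r" by (rule power2_eq_imp_eq) simp_all
  then have sub: "subplane_of_order B r" using r'(2) by simp
  interpret baer B r by unfold_locales (fact assms(1), fact sub)
  have opt: "optimal_saturating_1mu B (r ^ 2 + r + 1) ((r ^ 2 + r) div 2)" by (rule optimal)
  have codes: "nkd_code (r ^ 2 + r + 1) (r ^ 2 + r + 1 - 3) 3 (parity_check_code (r ^ 2 + r + 1) h)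
          \<and> covering_radius (r ^ 2 + r + 1) (parity_check_code (r ^ 2 + r + 1) h) = 2
          \<and> APMCF (r ^ 2 + r + 1) (parity_check_code (r ^ 2 + r + 1) h) 2 ((r ^ 2 + r) div 2)"
    if h: "columns_of B (r ^ 2 + r + 1) h" for h
  proof -
    interpret code B r h by unfold_locales (fact h)
    have nkd: "nkd_code N (N - 3) 3 CC"
      unfolding nkd_code_def code_dim_def by (intro conjI linear card_CC min_dist3)
    show ?thesis unfolding N_def[symmetric] by (intro conjI nkd cov_radius apmcf)
  qed
  show ?thesis by (intro conjI opt allI impI codes)
qed


end
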